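(* Let $I \subset K[x,y]$ be a monomial ideal with $G(I)=\{u_0,\ldots,u_m\}$, $u_i=x^{a_i}y^{b_i}$, ordered so that $a_0>a_1>\cdots>a_m$ and $b_0<b_1<\cdots<b_m$, and let $d_i=\deg(u_i)=a_i+b_i$. Then $I$ is componentwise polymatroidal if and only if all of the following hold: (i) for each $0\le i<m$ with $d_i>d_{i+1}$: $a_i-1>a_{i+1}$ and $b_{i+1}=b_i+1$; (ii) for each $0\le i<m$ with $d_i<d_{i+1}$: $b_i+1<b_{i+1}$ and $a_{i+1}=a_i-1$; (iii) for each $0\le i<m$ with $d_i=d_{i+1}$: $b_{i+1}=b_i+1$ and $a_{i+1}=a_i-1$; (iv) there exists $0\le j\le m$ with $d_0\ge d_1\ge\cdots\ge d_j\le d_{j+1}\le\cdots\le d_m$.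
   Context: $G(I)$ is the minimal monomial generating set; $\deg_{x}(u)$ is the exponent of $x$ in $u$. A monomial ideal generated in a single degree is polymatroidal if for all $u,v\in G(I)$ and all variables $z$ with $\deg_{z}(u)>\deg_{z}(v)$ there exists a variable $w$ with $\deg_{w}(u)<\deg_{w}(v)$ and $w(u/z)\in I$. $I_{\langle j\rangle}$ denotes the ideal generated by all monomials of degree $j$ in $I$; $I$ is componentwise polymatroidal if every nonzero $I_{\langle j\rangle}$ is polymatroidal. *)

theory Defs
  imports Main
begin

text \<open>Monomials of K[x,y] are represented by their exponent vectors (a,b) :: nat \<times> nat,
  standing for x^a y^b. A monomial ideal I of K[x,y] is determined by the set of
  monomials it contains, which is an upward closed subset of nat \<times> nat (and every
  such set arises this way). The field K plays no role.\<close>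

type_synonym monom = "nat \<times> nat"

datatype var = X | Y

definition deg_var :: "var \<Rightarrow> monom \<Rightarrow> nat" where
  "deg_var z u = (case z of X \<Rightarrow> fst u | Y \<Rightarrow> snd u)"

definition deg :: "monom \<Rightarrow> nat" where
  "deg u = fst u + snd u"

definition mult_var :: "var \<Rightarrow> monom \<Rightarrow> monom" where
  "mult_var z u = (case z of X \<Rightarrow> (fst u + 1, snd u) | Y \<Rightarrow> (fst u, snd u + 1))"

definition div_var :: "var \<Rightarrow> monom \<Rightarrow> monom" where
  "div_var z u = (case z of X \<Rightarrow> (fst u - 1, snd u) | Y \<Rightarrow> (fst u, snd u - 1))"

definition mdvd :: "monom \<Rightarrow> monom \<Rightarrow> bool" where
  "mdvd u v \<longleftrightarrow> fst u \<le> fst v \<and> snd u \<le> snd v"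

definition monomial_ideal :: "monom set \<Rightarrow> bool" where
  "monomial_ideal I \<longleftrightarrow> (\<forall>u\<in>I. \<forall>v. mdvd u v \<longrightarrow> v \<in> I)"

definition gens :: "monom set \<Rightarrow> monom set" where
  "gens I = {u \<in> I. \<forall>v\<in>I. mdvd v u \<longrightarrow> v = u}"

text \<open>I_<j>: ideal generated by all monomials of degree j in I\<close>
definition deg_comp :: "monom set \<Rightarrow> nat \<Rightarrow> monom set" where
  "deg_comp I j = {w. \<exists>u\<in>I. deg u = j \<and> mdvd u w}"

definition polymatroidal :: "monom set \<Rightarrow> bool" where
  "polymatroidal I \<longleftrightarrow>
     (\<exists>d. \<forall>u\<in>gens I. deg u = d) \<and>
     (\<forall>u\<in>gens I. \<forall>v\<in>gens I. \<forall>z. deg_var z u > deg_var z v \<longrightarrow>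
        (\<exists>w. deg_var w u < deg_var w v \<and> mult_var w (div_var z u) \<in> I))"

definition componentwise_polymatroidal :: "monom set \<Rightarrow> bool" where
  "componentwise_polymatroidal I \<longleftrightarrow>
     (\<forall>j. deg_comp I j \<noteq> {} \<longrightarrow> polymatroidal (deg_comp I j))"

end

theory Submission
  imports Defs
begin

lemma dec_a: assumes "\<forall>i<m. a i > a (Suc i)" "i < k" "k \<le> m" shows "a k < (a i::nat)"
  using assms(2,3)
proof (induction k)
  case 0 then show ?case by simp
next
  case (Suc k)
  then show ?case using assms(1) by (cases "i = k") (auto, meson Suc_le_lessD less_SucE order.strict_trans)
qed

lemma inc_b: assumes "\<forall>i<m. b i < b (Suc i)" "i < k" "k \<le> m" shows "b i < (b k::nat)"
  using assms(2,3)
proof (induction k)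
  case 0 then show ?case by simp
next
  case (Suc k)
  then show ?case using assms(1) by (cases "i = k") (auto, meson Suc_le_lessD less_SucE order.strict_trans)
qed

lemma gen_below: assumes "monomial_ideal I" "w \<in> I" shows "\<exists>g\<in>gens I. mdvd g w"
  using assms(2)
proof (induction "fst w + snd w" arbitrary: w rule: less_induct)
  case less
  show ?case
  proof (cases "w \<in> gens I")
    case True then show ?thesis by (auto simp: mdvd_def)
  next
    case False
    then obtain v where v: "v \<in> I" "mdvd v w" "v \<noteq> w" using less.prems unfolding gens_def by auto
    then have "fst v + snd v < fst w + snd w" unfolding mdvd_def by (auto simp: prod_eq_iff)
    then obtain g where "g \<in> gens I" "mdvd g v" using less.hyps v(1) by blast
    then show ?thesis using v(2) unfolding mdvd_def by (meson le_trans)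
  qed
qed

lemma mem_iff: assumes "monomial_ideal I" "gens I = {(a i, b i) | i. i \<le> m}"
  shows "(p,q) \<in> I \<longleftrightarrow> (\<exists>i\<le>m. a i \<le> p \<and> b i \<le> q)"
proof
  assume "(p,q) \<in> I"
  then obtain g where "g \<in> gens I" "mdvd g (p,q)" using gen_below assms(1) by blast
  then show "\<exists>i\<le>m. a i \<le> p \<and> b i \<le> q" using assms(2) by (auto simp: mdvd_def)
next
  assume "\<exists>i\<le>m. a i \<le> p \<and> b i \<le> q"
  then obtain i where "i \<le> m" "a i \<le> p" "b i \<le> q" by blast
  then have "(a i, b i) \<in> I" using assms(2) unfolding gens_def by blast
  then show "(p,q) \<in> I" using assms(1) \<open>a i \<le> p\<close> \<open>b i \<le> q\<close>
    unfolding monomial_ideal_def mdvd_def by fastforce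
qed

lemma gens_deg_comp: assumes "monomial_ideal I"
  shows "gens (deg_comp I j) = {u \<in> I. deg u = j}"
proof -
  have A: "u \<in> I" if "u \<in> deg_comp I j" for u
    using that assms unfolding deg_comp_def monomial_ideal_def by blast
  have B: "deg u \<ge> j" if "u \<in> deg_comp I j" for u
    using that unfolding deg_comp_def deg_def mdvd_def by auto
  show ?thesis
  proof (intro set_eqI iffI)
    fix u assume u: "u \<in> gens (deg_comp I j)"
    then have "u \<in> deg_comp I j" unfolding gens_def by auto
    then obtain u' where u': "u' \<in> I" "deg u' = j" "mdvd u' u" unfolding deg_comp_def by auto
    then have "u' \<in> deg_comp I j" unfolding deg_comp_def by (auto simp: mdvd_def)
    then have "u' = u" using u u'(3) unfolding gens_def by auto
    then show "u \<in> {u \<in> I. deg u = j}" using u' by auto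
  next
    fix u assume u: "u \<in> {u \<in> I. deg u = j}"
    then have "u \<in> deg_comp I j" unfolding deg_comp_def by (auto simp: mdvd_def)
    moreover have "v = u" if "v \<in> deg_comp I j" "mdvd v u" for v
      using B[OF that(1)] that(2) u unfolding mdvd_def deg_def by (auto simp: prod_eq_iff)
    ultimately show "u \<in> gens (deg_comp I j)" unfolding gens_def by auto
  qed
qed

lemma deg_comp_mem: assumes "monomial_ideal I" "deg w = j" shows "w \<in> deg_comp I j \<longleftrightarrow> w \<in> I"
proof
  assume "w \<in> deg_comp I j"
  then obtain u where "u \<in> I" "mdvd u w" unfolding deg_comp_def by blast
  then show "w \<in> I" using assms(1) unfolding monomial_ideal_def by blast
next
  assume "w \<in> I"
  then show "w \<in> deg_comp I j" using assms(2) unfolding deg_comp_def mdvd_def by blast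
qed

lemma CP_iff: assumes mi: "monomial_ideal I"
  shows "componentwise_polymatroidal I \<longleftrightarrow>
    (\<forall>p q p' q'. (p,q) \<in> I \<longrightarrow> (p',q') \<in> I \<longrightarrow> p + q = p' + q' \<longrightarrow>
       (p > p' \<longrightarrow> (p - 1, q + 1) \<in> I) \<and> (q > q' \<longrightarrow> (p + 1, q - 1) \<in> I))"
  (is "?L \<longleftrightarrow> ?R")
proof
  assume L: ?L
  show ?R
  proof (intro allI impI conjI)
    fix p q p' q' assume h: "(p,q) \<in> I" "(p',q') \<in> I" "p + q = p' + q'"
    let ?j = "p + q"
    have ne: "deg_comp I ?j \<noteq> {}" using h(1) deg_comp_mem[OF mi, of "(p,q)"] by (auto simp: deg_def)
    then have pm: "polymatroidal (deg_comp I ?j)" using L unfolding componentwise_polymatroidal_def by blast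
    have gu: "(p,q) \<in> gens (deg_comp I ?j)" "(p',q') \<in> gens (deg_comp I ?j)"
      using h gens_deg_comp[OF mi] by (auto simp: deg_def)
    {
      assume "p > p'"
      have ex: "\<forall>u\<in>gens (deg_comp I ?j). \<forall>v\<in>gens (deg_comp I ?j). \<forall>z. deg_var z u > deg_var z v \<longrightarrow>
        (\<exists>w. deg_var w u < deg_var w v \<and> mult_var w (div_var z u) \<in> deg_comp I ?j)"
        using pm unfolding polymatroidal_def by blast
      have "deg_var X (p,q) > deg_var X (p',q')" using \<open>p > p'\<close> by (simp add: deg_var_def)
      then obtain w where w: "deg_var w (p,q) < deg_var w (p',q')"
        "mult_var w (div_var X (p,q)) \<in> deg_comp I ?j"
        using ex gu by blast
      then have "w = Y" using \<open>p > p'\<close> by (cases w) (auto simp: deg_var_def)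
      then have "(p - 1, q + 1) \<in> deg_comp I ?j" using w by (simp add: mult_var_def div_var_def)
      moreover have "deg (p - 1, q + 1) = ?j" using \<open>p > p'\<close> h by (simp add: deg_def)
      ultimately show "(p - 1, q + 1) \<in> I" using deg_comp_mem[OF mi, of "(p - 1, q + 1)" ?j] by blast
    }
    {
      assume "q > q'"
      have ex: "\<forall>u\<in>gens (deg_comp I ?j). \<forall>v\<in>gens (deg_comp I ?j). \<forall>z. deg_var z u > deg_var z v \<longrightarrow>
        (\<exists>w. deg_var w u < deg_var w v \<and> mult_var w (div_var z u) \<in> deg_comp I ?j)"
        using pm unfolding polymatroidal_def by blast
      have "deg_var Y (p,q) > deg_var Y (p',q')" using \<open>q > q'\<close> by (simp add: deg_var_def)
      then obtain w where w: "deg_var w (p,q) < deg_var w (p',q')"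
        "mult_var w (div_var Y (p,q)) \<in> deg_comp I ?j"
        using ex gu by blast
      then have "w = X" using \<open>q > q'\<close> by (cases w) (auto simp: deg_var_def)
      then have "(p + 1, q - 1) \<in> deg_comp I ?j" using w by (simp add: mult_var_def div_var_def)
      moreover have "deg (p + 1, q - 1) = ?j" using \<open>q > q'\<close> h by (simp add: deg_def)
      ultimately show "(p + 1, q - 1) \<in> I" using deg_comp_mem[OF mi, of "(p + 1, q - 1)" ?j] by blast
    }
  qed
next
  assume R: ?R
  show ?L unfolding componentwise_polymatroidal_def
  proof (intro allI impI)
    fix j
    show "polymatroidal (deg_comp I j)" unfolding polymatroidal_def gens_deg_comp[OF mi]
    proof (intro conjI ballI allI impI)
      show "\<exists>d. \<forall>u\<in>{u \<in> I. deg u = j}. deg u = d" by auto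
    next
      fix u v z assume u: "u \<in> {u \<in> I. deg u = j}" and v: "v \<in> {u \<in> I. deg u = j}"
        and lt: "deg_var z v < deg_var z u"
      obtain p q where [simp]: "u = (p,q)" by fastforce
      obtain p' q' where [simp]: "v = (p',q')" by fastforce
      have h: "(p,q) \<in> I" "(p',q') \<in> I" "p + q = p' + q'" "p + q = j" using u v by (auto simp: deg_def)
      show "\<exists>w. deg_var w u < deg_var w v \<and> mult_var w (div_var z u) \<in> deg_comp I j"
      proof (cases z)
        case X
        then have "p > p'" using lt by (simp add: deg_var_def)
        then have "(p - 1, q + 1) \<in> I" using R h by blast
        then have "(p - 1, q + 1) \<in> deg_comp I j" using deg_comp_mem[OF mi, of "(p - 1, q + 1)" j] h \<open>p > p'\<close> by (simp add: deg_def)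
        then show ?thesis using X h \<open>p > p'\<close>
          by (intro exI[of _ Y]) (auto simp: deg_var_def mult_var_def div_var_def)
      next
        case Y
        then have "q > q'" using lt by (simp add: deg_var_def)
        then have "(p + 1, q - 1) \<in> I" using R h by blast
        then have "(p + 1, q - 1) \<in> deg_comp I j" using deg_comp_mem[OF mi, of "(p + 1, q - 1)" j] h \<open>q > q'\<close> by (simp add: deg_def)
        then show ?thesis using Y h \<open>q > q'\<close>
          by (intro exI[of _ X]) (auto simp: deg_var_def mult_var_def div_var_def)
      qed
    qed
  qed
qed


theorem theorem2p6:
  fixes I :: "monom set" and m :: nat and a b :: "nat \<Rightarrow> nat"
  assumes "monomial_ideal I"
    and "gens I = {(a i, b i) | i. i \<le> m}"
    and "\<forall>i<m. a i > a (Suc i)"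
    and "\<forall>i<m. b i < b (Suc i)"
  shows "componentwise_polymatroidal I \<longleftrightarrow>
    (\<forall>i<m. a i + b i > a (Suc i) + b (Suc i) \<longrightarrow>
        a i - 1 > a (Suc i) \<and> b (Suc i) = b i + 1) \<and>
    (\<forall>i<m. a i + b i < a (Suc i) + b (Suc i) \<longrightarrow>
        b i + 1 < b (Suc i) \<and> a (Suc i) = a i - 1) \<and>
    (\<forall>i<m. a i + b i = a (Suc i) + b (Suc i) \<longrightarrow>
        b (Suc i) = b i + 1 \<and> a (Suc i) = a i - 1) \<and>
    (\<exists>j\<le>m. (\<forall>i<j. a i + b i \<ge> a (Suc i) + b (Suc i)) \<and>
            (\<forall>i. j \<le> i \<and> i < m \<longrightarrow> a i + b i \<le> a (Suc i) + b (Suc i)))"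
proof -
  note mi = assms(1)
  have mem: "\<And>p q. (p,q) \<in> I \<longleftrightarrow> (\<exists>i\<le>m. a i \<le> p \<and> b i \<le> q)"
    using mem_iff[OF assms(1,2)] by blast
  have ga: "\<And>i k. i < k \<Longrightarrow> k \<le> m \<Longrightarrow> a k < a i" using dec_a[OF assms(3)] by blast
  have gb: "\<And>i k. i < k \<Longrightarrow> k \<le> m \<Longrightarrow> b i < b k" using inc_b[OF assms(4)] by blast
  have am: "\<And>i. i < m \<Longrightarrow> a (Suc i) < a i" using assms(3) by blast
  have bm: "\<And>i. i < m \<Longrightarrow> b i < b (Suc i)" using assms(4) by blast
  show ?thesis
  proof
    assume CP: "componentwise_polymatroidal I"
    have exX: "\<And>p q p' q'. (p,q) \<in> I \<Longrightarrow> (p',q') \<in> I \<Longrightarrow> p + q = p' + q' \<Longrightarrow> p > p' \<Longrightarrow> (p - 1, q + 1) \<in> I"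
      using CP CP_iff[OF mi] by blast
    have exY: "\<And>p q p' q'. (p,q) \<in> I \<Longrightarrow> (p',q') \<in> I \<Longrightarrow> p + q = p' + q' \<Longrightarrow> q > q' \<Longrightarrow> (p + 1, q - 1) \<in> I"
      using CP CP_iff[OF mi] by blast
    have B: "b (Suc i) = b i + 1" if i: "i < m" "a i + b i \<ge> a (Suc i) + b (Suc i)" for i
    proof -
      have ai: "a (Suc i) < a i" using am i by blast
      have bi: "b i < b (Suc i)" using bm i by blast
      have u: "(a i, b i) \<in> I" using i by (intro iffD2[OF mem] exI[of _ i]) auto
      have v: "(a (Suc i), a i + b i - a (Suc i)) \<in> I" using mem[of "a (Suc i)"] i ai
        by (intro iffD2[OF mem] exI[of _ "Suc i"]) auto
      have "(a i - 1, b i + 1) \<in> I" using exX[OF u v] ai by simp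
      then obtain g where g: "g \<le> m" "a g \<le> a i - 1" "b g \<le> b i + 1" using mem by blast
      have "Suc i \<le> g"
      proof (rule ccontr)
        assume "\<not> Suc i \<le> g"
        then have "g < i \<or> g = i" by auto
        then show False using ga[of g i] g i ai by auto
      qed
      then have "b (Suc i) \<le> b g" using gb[of "Suc i" g] g by (cases "Suc i = g") auto
      then show ?thesis using g bi by linarith
    qed
    have A: "a (Suc i) = a i - 1" if i: "i < m" "a i + b i \<le> a (Suc i) + b (Suc i)" for i
    proof -
      have ai: "a (Suc i) < a i" using am i by blast
      have bi: "b i < b (Suc i)" using bm i by blast
      have u: "(a (Suc i), b (Suc i)) \<in> I" using i by (intro iffD2[OF mem] exI[of _ "Suc i"]) auto
      have v: "(a i, a (Suc i) + b (Suc i) - a i) \<in> I" using i ai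
        by (intro iffD2[OF mem] exI[of _ i]) auto
      have "(a (Suc i) + 1, b (Suc i) - 1) \<in> I" using exY[OF u v] ai i by simp
      then obtain g where g: "g \<le> m" "a g \<le> a (Suc i) + 1" "b g \<le> b (Suc i) - 1" using mem by blast
      have "g \<le> i"
      proof (rule ccontr)
        assume "\<not> g \<le> i"
        then have "Suc i < g \<or> g = Suc i" by auto
        then show False using gb[of "Suc i" g] g i bi by auto
      qed
      then have "a i \<le> a g" using ga[of g i] g i by (cases "g = i") auto
      then show ?thesis using g ai by linarith
    qed
    have nopeak: False if h: "Suc k \<le> l" "l < m" "a k + b k < a (Suc k) + b (Suc k)"
      "a (Suc l) + b (Suc l) < a (Suc k) + b (Suc k)" for k l
    proof -
      define j where "j = a (Suc k) + b (Suc k) - 1"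
      have k: "k < m" using h by auto
      have a1: "a (Suc k) = a k - 1" using A[OF k] h by simp
      have ak: "a (Suc k) < a k" using am k by blast
      have bk: "b k < b (Suc k)" using bm k by blast
      have u: "(a k, j - a k) \<in> I" using h k unfolding j_def
        by (intro iffD2[OF mem] exI[of _ k]) auto
      have v: "(a (Suc l), j - a (Suc l)) \<in> I" using h unfolding j_def
        by (intro iffD2[OF mem] exI[of _ "Suc l"]) auto
      have akl: "a (Suc l) < a k" using ga[of k "Suc l"] h by auto
      have "(a k - 1, j - a k + 1) \<in> I"
        using exX[OF u v] akl h unfolding j_def by simp
      then obtain g where g: "g \<le> m" "a g \<le> a k - 1" "b g \<le> j - a k + 1" using mem by blast
      show False
      proof (cases "g < Suc k")
        case True
        then have "a k \<le> a g" using ga[of g k] k by (cases "g = k") auto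
        then show False using g ak by linarith
      next
        case False
        then have "b (Suc k) \<le> b g" using gb[of "Suc k" g] g by (cases "Suc k = g") auto
        then show False using g a1 ak bk h unfolding j_def by linarith
      qed
    qed
    have climb: "\<And>q. p < q \<Longrightarrow> q \<le> m \<Longrightarrow> a p + b p < a (Suc p) + b (Suc p) \<Longrightarrow>
      (\<exists>k. p \<le> k \<and> k < q \<and> a k + b k < a (Suc k) + b (Suc k) \<and>
         (\<forall>i. Suc k \<le> i \<and> i \<le> q \<longrightarrow> a i + b i \<le> a (Suc k) + b (Suc k)))" for p
    proof -
      fix q show "p < q \<Longrightarrow> q \<le> m \<Longrightarrow> a p + b p < a (Suc p) + b (Suc p) \<Longrightarrow> ?thesis q"
      proof (induction q)
        case 0 then show ?case by simp
      next
        case (Suc q)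
        show ?case
        proof (cases "p < q")
          case False
          then have "q = p" using Suc.prems by auto
          then show ?thesis using Suc.prems by (intro exI[of _ p]) (auto simp: le_Suc_eq)
        next
          case True
          then obtain k where k: "p \<le> k" "k < q" "a k + b k < a (Suc k) + b (Suc k)"
            "\<forall>i. Suc k \<le> i \<and> i \<le> q \<longrightarrow> a i + b i \<le> a (Suc k) + b (Suc k)"
            using Suc by auto
          show ?thesis
          proof (cases "a (Suc q) + b (Suc q) \<le> a (Suc k) + b (Suc k)")
            case True
            then show ?thesis using k by (intro exI[of _ k]) (auto simp: le_Suc_eq)
          next
            case False
            have "a q + b q \<le> a (Suc k) + b (Suc k)" using k by auto
            then have "a q + b q < a (Suc q) + b (Suc q)" using False by linarith
            then show ?thesis using k True
              by (intro exI[of _ q]) (auto simp: le_Suc_eq)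
          qed
        qed
      qed
    qed
    have c4: "\<exists>j\<le>m. (\<forall>i<j. a i + b i \<ge> a (Suc i) + b (Suc i)) \<and>
            (\<forall>i. j \<le> i \<and> i < m \<longrightarrow> a i + b i \<le> a (Suc i) + b (Suc i))"
    proof (cases "\<exists>i. i < m \<and> a i + b i < a (Suc i) + b (Suc i)")
      case False
      then show ?thesis by (intro exI[of _ m]) auto
    next
      case True
      define p where "p = (LEAST i. i < m \<and> a i + b i < a (Suc i) + b (Suc i))"
      have p: "p < m" "a p + b p < a (Suc p) + b (Suc p)"
        using LeastI_ex[OF True] unfolding p_def by auto
      have pre: "\<forall>i<p. a i + b i \<ge> a (Suc i) + b (Suc i)"
      proof (intro allI impI)
        fix i assume "i < p"
        then have "\<not> (i < m \<and> a i + b i < a (Suc i) + b (Suc i))"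
          using not_less_Least unfolding p_def by blast
        then show "a i + b i \<ge> a (Suc i) + b (Suc i)" using \<open>i < p\<close> p by auto
      qed
      have post: "\<forall>i. p \<le> i \<and> i < m \<longrightarrow> a i + b i \<le> a (Suc i) + b (Suc i)"
      proof (intro allI impI)
        fix i assume i: "p \<le> i \<and> i < m"
        show "a i + b i \<le> a (Suc i) + b (Suc i)"
        proof (rule ccontr)
          assume c: "\<not> ?thesis"
          have "i \<noteq> p" using c p by auto
          then have "p < i" using i by auto
          then obtain k where k: "p \<le> k" "k < i" "a k + b k < a (Suc k) + b (Suc k)"
            "\<forall>j. Suc k \<le> j \<and> j \<le> i \<longrightarrow> a j + b j \<le> a (Suc k) + b (Suc k)"
            using climb[of p i] i p by auto
          have "a i + b i \<le> a (Suc k) + b (Suc k)" using k by auto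
          then have "a (Suc i) + b (Suc i) < a (Suc k) + b (Suc k)" using c by linarith
          then show False using nopeak[of k i] k i by auto
        qed
      qed
      show ?thesis using p pre post by (intro exI[of _ p]) auto
    qed
    show "(\<forall>i<m. a i + b i > a (Suc i) + b (Suc i) \<longrightarrow>
        a i - 1 > a (Suc i) \<and> b (Suc i) = b i + 1) \<and>
      (\<forall>i<m. a i + b i < a (Suc i) + b (Suc i) \<longrightarrow>
        b i + 1 < b (Suc i) \<and> a (Suc i) = a i - 1) \<and>
      (\<forall>i<m. a i + b i = a (Suc i) + b (Suc i) \<longrightarrow>
        b (Suc i) = b i + 1 \<and> a (Suc i) = a i - 1) \<and>
      (\<exists>j\<le>m. (\<forall>i<j. a i + b i \<ge> a (Suc i) + b (Suc i)) \<and>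
            (\<forall>i. j \<le> i \<and> i < m \<longrightarrow> a i + b i \<le> a (Suc i) + b (Suc i)))"
    proof (intro conjI allI impI c4)
      fix i assume i: "i < m" "a i + b i > a (Suc i) + b (Suc i)"
      then show "b (Suc i) = b i + 1" using B by auto
      then show "a i - 1 > a (Suc i)" using i by linarith
    next
      fix i assume i: "i < m" "a i + b i < a (Suc i) + b (Suc i)"
      then show "a (Suc i) = a i - 1" using A by auto
      then show "b i + 1 < b (Suc i)" using i am[of i] by linarith
    next
      fix i assume i: "i < m" "a i + b i = a (Suc i) + b (Suc i)"
      then show "b (Suc i) = b i + 1" using B by auto
      show "a (Suc i) = a i - 1" using A i by auto
    qed
  next
    assume H: "(\<forall>i<m. a i + b i > a (Suc i) + b (Suc i) \<longrightarrow>
        a i - 1 > a (Suc i) \<and> b (Suc i) = b i + 1) \<and>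
      (\<forall>i<m. a i + b i < a (Suc i) + b (Suc i) \<longrightarrow>
        b i + 1 < b (Suc i) \<and> a (Suc i) = a i - 1) \<and>
      (\<forall>i<m. a i + b i = a (Suc i) + b (Suc i) \<longrightarrow>
        b (Suc i) = b i + 1 \<and> a (Suc i) = a i - 1) \<and>
      (\<exists>j\<le>m. (\<forall>i<j. a i + b i \<ge> a (Suc i) + b (Suc i)) \<and>
            (\<forall>i. j \<le> i \<and> i < m \<longrightarrow> a i + b i \<le> a (Suc i) + b (Suc i)))"
    have A: "\<And>g. g < m \<Longrightarrow> a g + b g \<le> a (Suc g) + b (Suc g) \<Longrightarrow> a (Suc g) = a g - 1"
      using H by (metis le_neq_implies_less)
    have B: "\<And>g. g < m \<Longrightarrow> a g + b g \<ge> a (Suc g) + b (Suc g) \<Longrightarrow> b (Suc g) = b g + 1"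
      using H by (metis le_neq_implies_less)
    obtain j0 where j0: "j0 \<le> m" "\<forall>i<j0. a i + b i \<ge> a (Suc i) + b (Suc i)"
      "\<forall>i. j0 \<le> i \<and> i < m \<longrightarrow> a i + b i \<le> a (Suc i) + b (Suc i)" using H by blast
    have V1: "\<And>x y. x \<le> y \<Longrightarrow> y \<le> j0 \<Longrightarrow> a y + b y \<le> a x + b x"
    proof -
      fix x y show "x \<le> y \<Longrightarrow> y \<le> j0 \<Longrightarrow> a y + b y \<le> a x + b x"
      proof (induction y)
        case 0 then show ?case by simp
      next
        case (Suc y)
        show ?case
        proof (cases "x = Suc y")
          case False
          then have "x \<le> y" using Suc by auto
          then show ?thesis using Suc j0(2)[rule_format, of y] by auto
        qed simp
      qed
    qed
    have V2: "\<And>x y. j0 \<le> x \<Longrightarrow> x \<le> y \<Longrightarrow> y \<le> m \<Longrightarrow> a x + b x \<le> a y + b y"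
    proof -
      fix x y show "j0 \<le> x \<Longrightarrow> x \<le> y \<Longrightarrow> y \<le> m \<Longrightarrow> a x + b x \<le> a y + b y"
      proof (induction y)
        case 0 then show ?case by simp
      next
        case (Suc y)
        show ?case
        proof (cases "x = Suc y")
          case False
          then have "x \<le> y" using Suc by auto
          then show ?thesis using Suc j0(3)[rule_format, of y] by auto
        qed simp
      qed
    qed
    have valley: "\<And>k g i. k \<le> g \<Longrightarrow> g \<le> i \<Longrightarrow> i \<le> m \<Longrightarrow>
        a g + b g \<le> a k + b k \<or> a g + b g \<le> a i + b i"
    proof -
      fix k g i assume "k \<le> g" "g \<le> i" "i \<le> m"
      show "a g + b g \<le> a k + b k \<or> a g + b g \<le> a i + b i"
      proof (cases "g \<le> j0")
        case True then show ?thesis using V1[of k g] \<open>k \<le> g\<close> by blast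
      next
        case False then show ?thesis using V2[of g i] \<open>g \<le> i\<close> \<open>i \<le> m\<close> by simp
      qed
    qed
    have step: "\<And>i. k \<le> i \<Longrightarrow> y < a k \<Longrightarrow> a i \<le> y \<Longrightarrow> \<exists>g. k \<le> g \<and> g < i \<and> y < a g \<and> a (Suc g) \<le> y"
      for k y
    proof -
      fix i show "k \<le> i \<Longrightarrow> y < a k \<Longrightarrow> a i \<le> y \<Longrightarrow> \<exists>g. k \<le> g \<and> g < i \<and> y < a g \<and> a (Suc g) \<le> y"
      proof (induction i)
        case 0 then show ?case by simp
      next
        case (Suc i)
        show ?case
        proof (cases "k = Suc i")
          case True then show ?thesis using Suc.prems by simp
        next
          case False
          then have ki: "k \<le> i" using Suc.prems by auto
          show ?thesis
          proof (cases "a i \<le> y")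
            case True
            then show ?thesis using Suc.IH ki Suc.prems by (meson less_SucI)
          next
            case False
            then show ?thesis using ki Suc.prems by (intro exI[of _ i]) auto
          qed
        qed
      qed
    qed
    have fill: "\<exists>g\<le>m. a g \<le> y \<and> b g \<le> j - y"
      if h: "k \<le> m" "i \<le> m" "a k + b k \<le> j" "a i + b i \<le> j" "a i \<le> y" "y \<le> j"
        "a k \<le> y \<Longrightarrow> b k \<le> j - y" for j y k i
    proof (cases "a k \<le> y")
      case True then show ?thesis using h by blast
    next
      case False
      then have "y < a k" by simp
      obtain g where g: "k \<le> g" "g < i" "y < a g" "a (Suc g) \<le> y"
      proof -
        have "k \<le> i"
        proof (rule ccontr)
          assume "\<not> k \<le> i"
          then have "a k < a i" using ga[of i k] h by auto
          then show False using h \<open>y < a k\<close> by linarith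
        qed
        then have "\<exists>g. k \<le> g \<and> g < i \<and> y < a g \<and> a (Suc g) \<le> y"
          by (rule step[OF _ \<open>y < a k\<close> h(5)])
        then show ?thesis using that by blast
      qed
      have gm: "g < m" using g h by auto
      have dg: "a g + b g \<le> j" using valley[of k g i] g h by auto
      have dg1: "a (Suc g) + b (Suc g) \<le> j" using valley[of k "Suc g" i] g h by auto
      show ?thesis
      proof (cases "a g + b g \<le> a (Suc g) + b (Suc g)")
        case True
        then have "a (Suc g) = a g - 1" using A gm by blast
        then show ?thesis using g dg1 gm by (intro exI[of _ "Suc g"]) auto
      next
        case False
        then have "b (Suc g) = b g + 1" using B gm by simp
        then show ?thesis using g dg gm by (intro exI[of _ "Suc g"]) auto
      qed
    qed
    show "componentwise_polymatroidal I"
      unfolding CP_iff[OF mi]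
    proof (intro allI impI conjI)
      fix p q p' q' assume h: "(p,q) \<in> I" "(p',q') \<in> I" "p + q = p' + q'"
      obtain k where k: "k \<le> m" "a k \<le> p" "b k \<le> q" using h(1) mem by blast
      obtain i where i: "i \<le> m" "a i \<le> p'" "b i \<le> q'" using h(2) mem by blast
      {
        assume pp: "p > p'"
        have f5: "a i \<le> p - 1" using i pp by linarith
        have f7: "a k \<le> p - 1 \<Longrightarrow> b k \<le> (p + q) - (p - 1)" using k pp by linarith
        have f3: "a k + b k \<le> p + q" and f4: "a i + b i \<le> p + q" and f6: "p - 1 \<le> p + q" using k i h by linarith+
        obtain g where g: "g \<le> m" "a g \<le> p - 1" "b g \<le> (p + q) - (p - 1)"
          using fill[OF k(1) i(1) f3 f4 f5 f6 f7] by blast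
        have "b g \<le> q + 1" using g(3) pp by linarith
        then show "(p - 1, q + 1) \<in> I" using g by (intro iffD2[OF mem] exI[of _ g]) blast
      }
      {
        assume qq: "q > q'"
        have pp: "p < p'" using qq h by linarith
        have f5: "a k \<le> p + 1" using k by linarith
        have f7: "a i \<le> p + 1 \<Longrightarrow> b i \<le> (p + q) - (p + 1)" using i h qq by linarith
        have f3: "a k + b k \<le> p + q" and f4: "a i + b i \<le> p + q" and f6: "p + 1 \<le> p + q" using k i h qq by linarith+
        obtain g where g: "g \<le> m" "a g \<le> p + 1" "b g \<le> (p + q) - (p + 1)"
          using fill[OF i(1) k(1) f4 f3 f5 f6 f7] by blast
        have "b g \<le> q - 1" using g(3) by linarith
        then show "(p + 1, q - 1) \<in> I" using g by (intro iffD2[OF mem] exI[of _ g]) blast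
      }
    qed
  qed
qed

end
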